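(* Let $K$ be a field of characteristic different from $2$, let $V=K^2$, and let $f:V\to V$ be the linear map with matrix $\begin{pmatrix}0&1\\0&0\end{pmatrix}$ in the standard basis (so $f\circ f=0$). Then the algebra $A=A(f,f,f,f)$ is associative and commutative, and the linear map $D:A\to A$ given by $D(e)=0$, $D(a)=0$, $D(v)=v$, $D(v')=-v'$ ($v\in V$) is a $(-1)$-derivation of $A$, i.e. $D(xy)=-D(x)y-xD(y)$ for all $x,y\in A$. Its eigenspace decomposition $A=A_0\oplus A_1\oplus A_{-1}$ with $A_0=Ke\oplus Ka$, $A_1=V$, $A_{-1}=V'$ is a non-semigroup grading of $A$: the induced partial operation on $\{0,1,-1\}$ satisfies $0*0=0$, $0*1=1*0=-1$, $0*(-1)=(-1)*0=1$, and so $(0*0)*(-1)=1\ne -1=0*(0*(-1))$.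
   Context: Let $V'$ be a second copy of $V$, identified with $V$ via a linear bijection $v\mapsto v'$. For linear maps $f_L,f_R,g_L,g_R:V\to V$, the algebra $A(f_L,f_R,g_L,g_R)$ is the vector space $Ke\oplus Ka\oplus V\oplus V'$ (with $e,a$ two new basis elements) with bilinear multiplication determined by $e^2=e$, $a^2=0$, $av=f_L(v)'$, $va=f_R(v)'$, $av'=g_L(v)$, $v'a=g_R(v)$ for $v\in V$, and all other products among $e$, $a$, elements of $V$ and elements of $V'$ equal to zero. A grading of $A$ over a set $\Gamma$ is a decomposition $A=\bigoplus_{g\in\Gamma}A_g$ together with a partial binary operation $*$ on $\Gamma$, defined for exactly those pairs $(g,h)$ with $A_gA_h\ne0$, such that $A_gA_h\subseteq A_{g*h}$ in that case. The grading is a semigroup grading if there is a semigroup $(G,\cdot)$ and an injective map $\Gamma\to G$ under which $g*h=g\cdot h$ whenever $A_gA_h\ne0$; otherwise it is a non-semigroup grading. *)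

theory Defs
  imports Main "HOL-Library.Product_Plus"
begin

text \<open>Elements of A = Ke + Ka + V + V' with V = K^2 are represented as tuples
  (coefficient of e, coefficient of a, v, w) standing for c e + d a + v + w'.\<close>
type_synonym 'k vec2 = "'k \<times> 'k"
type_synonym 'k alg = "'k \<times> 'k \<times> 'k vec2 \<times> 'k vec2"

definition vsmul :: "'k::field \<Rightarrow> 'k vec2 \<Rightarrow> 'k vec2" where
  "vsmul c v = (c * fst v, c * snd v)"

definition alg_smul :: "'k::field \<Rightarrow> 'k alg \<Rightarrow> 'k alg" where
  "alg_smul c x = (case x of (ce, ca, v, w) \<Rightarrow> (c * ce, c * ca, vsmul c v, vsmul c w))"

text \<open>Multiplication of A(fL,fR,gL,gR): e^2 = e, a^2 = 0, a v = fL(v)', v a = fR(v)',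
  a v' = gL(v), v' a = gR(v), all other products of basis parts zero.\<close>
definition Amul :: "('k vec2 \<Rightarrow> 'k vec2) \<Rightarrow> ('k vec2 \<Rightarrow> 'k vec2) \<Rightarrow>
    ('k vec2 \<Rightarrow> 'k vec2) \<Rightarrow> ('k vec2 \<Rightarrow> 'k vec2) \<Rightarrow> 'k::field alg \<Rightarrow> 'k alg \<Rightarrow> 'k alg" where
  "Amul fL fR gL gR x y =
     (case x of (e1, a1, v1, w1) \<Rightarrow> case y of (e2, a2, v2, w2) \<Rightarrow>
       (e1 * e2, 0, vsmul a1 (gL w2) + vsmul a2 (gR w1), vsmul a1 (fL v2) + vsmul a2 (fR v1)))"

definition nilf :: "'k::field vec2 \<Rightarrow> 'k vec2" where
  "nilf v = (snd v, 0)"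

abbreviation Anil :: "'k::field alg \<Rightarrow> 'k alg \<Rightarrow> 'k alg" where
  "Anil \<equiv> Amul nilf nilf nilf nilf"

definition Dmap :: "'k::field alg \<Rightarrow> 'k alg" where
  "Dmap x = (case x of (ce, ca, v, w) \<Rightarrow> (0, 0, v, - w))"

definition eigsp :: "('k::field alg \<Rightarrow> 'k alg) \<Rightarrow> 'k \<Rightarrow> 'k alg set" where
  "eigsp T c = {x. T x = alg_smul c x}"

definition is_subspace :: "'k::field alg set \<Rightarrow> bool" where
  "is_subspace S \<longleftrightarrow> 0 \<in> S \<and> (\<forall>x\<in>S. \<forall>y\<in>S. x + y \<in> S) \<and> (\<forall>c. \<forall>x\<in>S. alg_smul c x \<in> S)"

text \<open>A grading of the algebra (whole carrier, multiplication mul) over a finite set \<Gamma>: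
  a direct sum decomposition into subspaces cmp g (g \<in> \<Gamma>) together with a partial
  binary operation op on \<Gamma> (None = undefined), defined exactly when cmp g * cmp h \<noteq> 0,
  and then cmp g * cmp h \<subseteq> cmp (g*h).\<close>
definition is_grading :: "('k::field alg \<Rightarrow> 'k alg \<Rightarrow> 'k alg) \<Rightarrow> 'g set \<Rightarrow> ('g \<Rightarrow> 'k alg set)
    \<Rightarrow> ('g \<Rightarrow> 'g \<Rightarrow> 'g option) \<Rightarrow> bool" where
  "is_grading mul \<Gamma> cmp op \<longleftrightarrow>
     finite \<Gamma> \<and>
     (\<forall>g\<in>\<Gamma>. is_subspace (cmp g)) \<and>
     (\<forall>x. \<exists>!c. (\<forall>g\<in>\<Gamma>. c g \<in> cmp g) \<and> (\<forall>g. g \<notin> \<Gamma> \<longrightarrow> c g = 0) \<and> x = (\<Sum>g\<in>\<Gamma>. c g)) \<and>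
     (\<forall>g\<in>\<Gamma>. \<forall>h\<in>\<Gamma>.
        (op g h \<noteq> None \<longleftrightarrow> (\<exists>x\<in>cmp g. \<exists>y\<in>cmp h. mul x y \<noteq> 0)) \<and>
        (\<forall>k. op g h = Some k \<longrightarrow> k \<in> \<Gamma> \<and> (\<forall>x\<in>cmp g. \<forall>y\<in>cmp h. mul x y \<in> cmp k)))"

text \<open>The semigroup is a type of class
  semigroup_mult; the theorem quantifies over all such types.\<close>
definition semigroup_grading_into :: "'g set \<Rightarrow> ('g \<Rightarrow> 'g \<Rightarrow> 'g option) \<Rightarrow> ('g \<Rightarrow> 's::semigroup_mult) \<Rightarrow> bool" where
  "semigroup_grading_into \<Gamma> op \<iota> \<longleftrightarrow> inj_on \<iota> \<Gamma> \<and>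
     (\<forall>g\<in>\<Gamma>. \<forall>h\<in>\<Gamma>. \<forall>k. op g h = Some k \<longrightarrow> \<iota> k = \<iota> g * \<iota> h)"

end

theory Submission
  imports Defs
begin

lemma zero4: "(0::'k::field alg) = (0,0,(0,0),(0,0))"
  by (simp add: zero_prod_def)

lemma Anil_simp:
  "Anil ((e1,a1,(p1,q1),(r1,s1))::'k::field alg) (e2,a2,(p2,q2),(r2,s2)) =
     (e1*e2, 0, (a1*s2 + a2*s1, 0), (a1*q2 + a2*q1, 0))"
  by (simp add: Amul_def vsmul_def nilf_def)

lemma Dmap_simp: "Dmap ((e,a,(p,q),(r,s))::'k::field alg) = (0,0,(p,q),(-r,-s))"
  by (simp add: Dmap_def)

lemma smul_simp: "alg_smul c ((e,a,(p,q),(r,s))::'k::field alg) = (c*e,c*a,(c*p,c*q),(c*r,c*s))"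
  by (simp add: alg_smul_def vsmul_def)

lemma eig0: "eigsp (Dmap :: 'k::field alg \<Rightarrow> 'k alg) 0 = {(c, d, 0, 0) | c d. True}"
  apply (auto simp: eigsp_def Dmap_def alg_smul_def vsmul_def zero_prod_def split: prod.splits)
  done

lemma eig1: assumes "(2::'k::field) \<noteq> 0"
  shows "eigsp (Dmap :: 'k alg \<Rightarrow> 'k alg) 1 = {(0, 0, v, 0) | v. True}"
proof -
  have h: "(-x = (x::'k)) \<longleftrightarrow> x = 0" for x
  proof
    assume "-x = x" then have "2*x = 0" by (simp add: algebra_simps mult_2 add_eq_0_iff)
    with assms show "x = 0" by simp
  qed simp
  show ?thesis
    by (auto simp: eigsp_def Dmap_def alg_smul_def vsmul_def zero_prod_def h split: prod.splits)
qed

lemma eigm1: assumes "(2::'k::field) \<noteq> 0"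
  shows "eigsp (Dmap :: 'k alg \<Rightarrow> 'k alg) (-1) = {(0, 0, 0, w) | w. True}"
proof -
  have h: "(x = -(x::'k)) \<longleftrightarrow> x = 0" for x
  proof
    assume "x = -x" then have "2*x = 0" by (simp add: algebra_simps mult_2 add_eq_0_iff)
    with assms show "x = 0" by simp
  qed simp
  show ?thesis
    by (auto simp: eigsp_def Dmap_def alg_smul_def vsmul_def zero_prod_def h split: prod.splits)
qed

lemma cmp_simp: assumes "(2::'k::field) \<noteq> 0"
  shows "eigsp (Dmap :: 'k alg \<Rightarrow> 'k alg) (of_int 0) = {(c, d, 0, 0) | c d. True}"
   "eigsp (Dmap :: 'k alg \<Rightarrow> 'k alg) (of_int 1) = {(0, 0, v, 0) | v. True}"
   "eigsp (Dmap :: 'k alg \<Rightarrow> 'k alg) (of_int (-1)) = {(0, 0, 0, w) | w. True}"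
  using eig0 eig1[OF assms] eigm1[OF assms] by simp_all

definition opG :: "int \<Rightarrow> int \<Rightarrow> int option" where
  "opG g h = (if g = 0 \<and> h = 0 then Some 0 else if g = 0 \<and> h = 1 then Some (-1)
     else if g = 1 \<and> h = 0 then Some (-1) else if g = 0 \<and> h = -1 then Some 1
     else if g = -1 \<and> h = 0 then Some 1 else None)"

lemma decomp:
  "\<exists>!c. (\<forall>g\<in>{0,1,-1::int}. c g \<in> (\<lambda>g. if g = 0 then {(c, d, 0, 0) | c d. True}
      else if g = 1 then {(0, 0, v, 0) | v. True} else {(0, 0, 0, w) | w. True}) g)
    \<and> (\<forall>g. g \<notin> {0,1,-1} \<longrightarrow> c g = 0) \<and> (x::'k::field alg) = (\<Sum>g\<in>{0,1,-1}. c g)"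
proof -
  obtain ce ca v w where x: "x = (ce,ca,v,w)" by (cases x) auto
  let ?c = "\<lambda>g::int. if g = 0 then (ce,ca,0,0) else if g = 1 then (0,0,v,0)
     else if g = -1 then (0,0,0,w) else (0::'k alg)"
  show ?thesis
  proof (rule ex1I[of _ ?c])
    show "(\<forall>g\<in>{0,1,-1::int}. ?c g \<in> (\<lambda>g. if g = 0 then {(c, d, 0, 0) | c d. True}
      else if g = 1 then {(0, 0, v, 0) | v. True} else {(0, 0, 0, w) | w. True}) g)
    \<and> (\<forall>g. g \<notin> {0,1,-1} \<longrightarrow> ?c g = 0) \<and> x = (\<Sum>g\<in>{0,1,-1}. ?c g)"
      by (auto simp: x zero_prod_def)
  next
    fix c assume H: "(\<forall>g\<in>{0,1,-1::int}. c g \<in> (\<lambda>g. if g = 0 then {(c, d, 0, 0) | c d. True}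
      else if g = 1 then {(0, 0, v, 0) | v. True} else {(0, 0, 0, w) | w. True}) g)
    \<and> (\<forall>g. g \<notin> {0,1,-1} \<longrightarrow> c g = 0) \<and> x = (\<Sum>g\<in>{0,1,-1}. c g)"
    from H obtain c1 d1 where c0: "c 0 = (c1,d1,0,0)" by auto
    from H obtain v1 where c1: "c 1 = (0,0,v1,0)" by auto
    from H obtain w1 where c2: "c (-1) = (0,0,0,w1)" by fastforce
    from H have s: "x = c 0 + (c 1 + c (-1))" by simp
    have e: "c1 = ce" "d1 = ca" "v1 = v" "w1 = w" using s c0 c1 c2 by (auto simp: x zero_prod_def)
    show "c = ?c"
    proof
      fix g show "c g = ?c g" using H c0 c1 c2 e by auto
    qed
  qed
qed

lemma exnz: "(\<exists>a::'k::field. a \<noteq> 0) = True" by (simp add: exI[of _ 1])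

lemma ops_lem: assumes "(2::'k::field) \<noteq> 0" "g \<in> {0,1,-1::int}" "h \<in> {0,1,-1::int}"
  shows "(opG g h \<noteq> None \<longleftrightarrow> (\<exists>x\<in>eigsp Dmap (of_int g). \<exists>y\<in>eigsp Dmap (of_int h). Anil x y \<noteq> (0::'k alg))) \<and>
        (\<forall>k. opG g h = Some k \<longrightarrow> k \<in> {0,1,-1} \<and> (\<forall>x\<in>eigsp Dmap (of_int g). \<forall>y\<in>eigsp Dmap (of_int h). Anil x y \<in> (eigsp Dmap (of_int k) :: 'k alg set)))"
  using assms(2,3)
    apply (simp only: insert_iff empty_iff)
    apply (elim disjE; simp add: eig0 eig1[OF assms(1)] eigm1[OF assms(1)] opG_def)
    apply (auto simp: Anil_simp zero_prod_def exnz eigsp_def Dmap_def alg_smul_def vsmul_def)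
    done

lemma grading: assumes "(2::'k::field) \<noteq> 0"
  shows "is_grading (Anil :: 'k alg \<Rightarrow> 'k alg \<Rightarrow> 'k alg) {0, 1, -1 :: int}
              (\<lambda>g. eigsp Dmap (of_int g)) opG"
proof -
  have cm: "(\<lambda>g. eigsp (Dmap :: 'k alg \<Rightarrow> 'k alg) (of_int g)) g = (if g = 0 then {(c, d, 0, 0) | c d. True}
      else if g = 1 then {(0, 0, v, 0) | v. True} else {(0, 0, 0, w) | w. True})"
    if "g \<in> {0,1,-1}" for g using that cmp_simp[OF assms] by auto
  have sub: "is_subspace (eigsp (Dmap :: 'k alg \<Rightarrow> 'k alg) (of_int g))" for g
    unfolding is_subspace_def eigsp_def
    by (auto simp: Dmap_def alg_smul_def vsmul_def split_beta prod_eq_iff distrib_left)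
       (metis mult.left_commute mult_minus_right)+
  have dec: "\<forall>x. \<exists>!c. (\<forall>g\<in>{0,1,-1::int}. c g \<in> (\<lambda>g. eigsp (Dmap :: 'k alg \<Rightarrow> 'k alg) (of_int g)) g)
      \<and> (\<forall>g. g \<notin> {0,1,-1} \<longrightarrow> c g = 0) \<and> (x::'k alg) = (\<Sum>g\<in>{0,1,-1}. c g)"
  proof
    fix x :: "'k alg"
    have eq: "(\<forall>g\<in>{0,1,-1::int}. c g \<in> (\<lambda>g. eigsp (Dmap :: 'k alg \<Rightarrow> 'k alg) (of_int g)) g) =
       (\<forall>g\<in>{0,1,-1::int}. c g \<in> (\<lambda>g. if g = 0 then {(c, d, 0, 0) | c d. True}
      else if g = 1 then {(0, 0, v, 0) | v. True} else {(0, 0, 0, w) | w. True}) g)" for c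
      by (rule ball_cong[OF refl]) (simp only: cm)
    show "\<exists>!c. (\<forall>g\<in>{0,1,-1::int}. c g \<in> (\<lambda>g. eigsp (Dmap :: 'k alg \<Rightarrow> 'k alg) (of_int g)) g)
      \<and> (\<forall>g. g \<notin> {0,1,-1} \<longrightarrow> c g = 0) \<and> (x::'k alg) = (\<Sum>g\<in>{0,1,-1}. c g)"
      unfolding eq by (rule decomp)
  qed
  have ops2: "\<forall>g\<in>{0,1,-1::int}. \<forall>h\<in>{0,1,-1::int}. (opG g h \<noteq> None \<longleftrightarrow> (\<exists>x\<in>eigsp Dmap (of_int g). \<exists>y\<in>eigsp Dmap (of_int h). Anil x y \<noteq> (0::'k alg))) \<and>
        (\<forall>k. opG g h = Some k \<longrightarrow> k \<in> {0,1,-1} \<and> (\<forall>x\<in>eigsp Dmap (of_int g). \<forall>y\<in>eigsp Dmap (of_int h). Anil x y \<in> (eigsp Dmap (of_int k) :: 'k alg set)))"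
  proof (intro ballI)
    fix g h assume "g \<in> {0,1,-1::int}" "h \<in> {0,1,-1::int}"
    then show "(opG g h \<noteq> None \<longleftrightarrow> (\<exists>x\<in>eigsp Dmap (of_int g). \<exists>y\<in>eigsp Dmap (of_int h). Anil x y \<noteq> (0::'k alg))) \<and>
        (\<forall>k. opG g h = Some k \<longrightarrow> k \<in> {0,1,-1} \<and> (\<forall>x\<in>eigsp Dmap (of_int g). \<forall>y\<in>eigsp Dmap (of_int h). Anil x y \<in> (eigsp Dmap (of_int k) :: 'k alg set)))"
      by (rule ops_lem[OF assms])
  qed
  have fin: "finite {0,1,-1::int}" by simp
  have sub2: "\<forall>g\<in>{0,1,-1::int}. is_subspace (eigsp (Dmap :: 'k alg \<Rightarrow> 'k alg) (of_int g))"
    using sub by simp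
  show ?thesis unfolding is_grading_def
    apply (intro conjI)
       apply (rule fin)
      apply (rule sub2)
     apply (rule dec)
    apply (rule ops2)
    done
qed


lemma det:
  fixes x y :: "'k::field alg"
  assumes G: "is_grading (Anil :: 'k alg \<Rightarrow> 'k alg \<Rightarrow> 'k alg) {0,1,-1::int} (\<lambda>g. eigsp Dmap (of_int g)) op"
    and g: "g \<in> {0,1,-1}" and h: "h \<in> {0,1,-1}"
    and x: "x \<in> eigsp Dmap (of_int g)" and y: "y \<in> eigsp Dmap (of_int h)"
    and nz: "Anil x y \<noteq> 0"
    and oth: "\<forall>k'\<in>{0,1,-1}. Anil x y \<in> eigsp Dmap (of_int k') \<longrightarrow> k' = k"
  shows "op g h = Some k"
proof -
  note A = G[unfolded is_grading_def, THEN conjunct2, THEN conjunct2, THEN conjunct2]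
  note H = bspec[OF bspec[OF A g] h]
  have ex: "\<exists>x\<in>eigsp Dmap (of_int g). \<exists>y\<in>eigsp Dmap (of_int h). Anil x y \<noteq> (0::'k alg)"
    using x y nz by (intro bexI)
  have "op g h \<noteq> None" using conjunct1[OF H] ex by (simp only:)
  then obtain k0 where k0: "op g h = Some k0" by auto
  have K: "k0 \<in> {0,1,-1} \<and> (\<forall>x\<in>eigsp Dmap (of_int g). \<forall>y\<in>eigsp Dmap (of_int h). Anil x y \<in> (eigsp Dmap (of_int k0) :: 'k alg set))"
    using mp[OF spec[OF conjunct2[OF H], of k0] k0] .
  have memb: "Anil x y \<in> eigsp Dmap (of_int k0)" using bspec[OF bspec[OF conjunct2[OF K] x] y] .
  have "k0 = k" using mp[OF bspec[OF oth conjunct1[OF K]] memb] .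
  with k0 show ?thesis by simp
qed

lemma nonsg:
  assumes i: "op (0::int) 0 = Some 0" "op 0 1 = Some (-1)" "op 0 (-1) = Some 1"
  shows "\<not> semigroup_grading_into {0, 1, -1 :: int} op (\<iota> :: int \<Rightarrow> 's::semigroup_mult)"
proof
  assume S: "semigroup_grading_into {0, 1, -1 :: int} op \<iota>"
  have inj: "inj_on \<iota> {0,1,-1}"
    using S unfolding semigroup_grading_into_def by (rule conjunct1)
  have P: "\<forall>g\<in>{0,1,-1}. \<forall>h\<in>{0,1,-1}. \<forall>k. op g h = Some k \<longrightarrow> \<iota> k = \<iota> g * \<iota> h"
    using S unfolding semigroup_grading_into_def by (rule conjunct2)
  have m: "0 \<in> {0,1,-1::int}" "1 \<in> {0,1,-1::int}" "-1 \<in> {0,1,-1::int}" by simp_all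
  have a: "\<iota> 0 = \<iota> 0 * \<iota> 0" using mp[OF spec[OF bspec[OF bspec[OF P m(1)] m(1)], of 0] i(1)] .
  have b: "\<iota> (-1) = \<iota> 0 * \<iota> 1" using mp[OF spec[OF bspec[OF bspec[OF P m(1)] m(2)], of "-1"] i(2)] .
  have c: "\<iota> 1 = \<iota> 0 * \<iota> (-1)" using mp[OF spec[OF bspec[OF bspec[OF P m(1)] m(3)], of 1] i(3)] .
  have "\<iota> 1 = \<iota> 0 * \<iota> (-1)" by (rule c)
  also have "\<dots> = (\<iota> 0 * \<iota> 0) * \<iota> (-1)" using arg_cong[OF a, of "\<lambda>t. t * \<iota> (-1)"] .
  also have "\<dots> = \<iota> 0 * (\<iota> 0 * \<iota> (-1))" by (rule mult.assoc)
  also have "\<dots> = \<iota> 0 * \<iota> 1" by (simp only: c[symmetric])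
  also have "\<dots> = \<iota> (-1)" by (rule b[symmetric])
  finally have "\<iota> 1 = \<iota> (-1)" .
  from inj_onD[OF inj this m(2) m(3)] have "(1::int) = -1" .
  thus False by simp
qed

theorem mainTheorem5:
  assumes char: "(2::'k::field) \<noteq> 0"
  shows "(\<forall>x y z :: 'k alg. Anil (Anil x y) z = Anil x (Anil y z))
    \<and> (\<forall>x y :: 'k alg. Anil x y = Anil y x)
    \<and> (\<forall>x y :: 'k alg. Dmap (Anil x y) = - Anil (Dmap x) y - Anil x (Dmap y))
    \<and> eigsp (Dmap :: 'k alg \<Rightarrow> 'k alg) 0 = {(c, d, 0, 0) | c d. True}
    \<and> eigsp (Dmap :: 'k alg \<Rightarrow> 'k alg) 1 = {(0, 0, v, 0) | v. True}
    \<and> eigsp (Dmap :: 'k alg \<Rightarrow> 'k alg) (-1) = {(0, 0, 0, w) | w. True}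
    \<and> (\<exists>op. is_grading (Anil :: 'k alg \<Rightarrow> 'k alg \<Rightarrow> 'k alg) {0, 1, -1 :: int}
              (\<lambda>g. eigsp Dmap (of_int g)) op)
    \<and> (\<forall>op. is_grading (Anil :: 'k alg \<Rightarrow> 'k alg \<Rightarrow> 'k alg) {0, 1, -1 :: int}
              (\<lambda>g. eigsp Dmap (of_int g)) op \<longrightarrow>
            op 0 0 = Some 0 \<and> op 0 1 = Some (-1) \<and> op 1 0 = Some (-1)
            \<and> op 0 (-1) = Some 1 \<and> op (-1) 0 = Some 1
            \<and> (\<forall>\<iota> :: int \<Rightarrow> 's::semigroup_mult.
                  \<not> semigroup_grading_into {0, 1, -1 :: int} op \<iota>))"
proof (intro conjI allI impI)
  show "Anil (Anil x y) z = Anil x (Anil y z)" for x y z :: "'k alg"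
    by (simp add: Amul_def vsmul_def nilf_def split_beta)
  show "Anil x y = Anil y x" for x y :: "'k alg"
    by (simp add: Amul_def vsmul_def nilf_def split_beta add.commute mult.commute)
  show "Dmap (Anil x y) = - Anil (Dmap x) y - Anil x (Dmap y)" for x y :: "'k alg"
    by (simp add: Amul_def vsmul_def nilf_def Dmap_def split_beta algebra_simps)
  show "eigsp (Dmap :: 'k alg \<Rightarrow> 'k alg) 0 = {(c, d, 0, 0) | c d. True}" by (rule eig0)
  show "eigsp (Dmap :: 'k alg \<Rightarrow> 'k alg) 1 = {(0, 0, v, 0) | v. True}" by (rule eig1[OF char])
  show "eigsp (Dmap :: 'k alg \<Rightarrow> 'k alg) (-1) = {(0, 0, 0, w) | w. True}" by (rule eigm1[OF char])
  show "\<exists>op. is_grading (Anil :: 'k alg \<Rightarrow> 'k alg \<Rightarrow> 'k alg) {0, 1, -1 :: int}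
              (\<lambda>g. eigsp Dmap (of_int g)) op" using grading[OF char] by blast
  fix op assume G: "is_grading (Anil :: 'k alg \<Rightarrow> 'k alg \<Rightarrow> 'k alg) {0, 1, -1 :: int}
              (\<lambda>g. eigsp Dmap (of_int g)) op"
  note E = eig0 eig1[OF char] eigm1[OF char]
  show o00: "op 0 0 = Some 0"
    by (rule det[OF G, of _ _ "(1,0,0,0)::'k alg" "(1,0,0,0)::'k alg"]) (auto simp: E Anil_simp zero_prod_def char[symmetric] eigsp_def Dmap_def alg_smul_def vsmul_def)
  show o01: "op 0 1 = Some (-1)"
    by (rule det[OF G, of _ _ "(0,1,0,0)::'k alg" "(0,0,(0,1),0)::'k alg"]) (auto simp: E Anil_simp zero_prod_def char[symmetric] eigsp_def Dmap_def alg_smul_def vsmul_def)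
  show "op 1 0 = Some (-1)"
    by (rule det[OF G, of _ _ "(0,0,(0,1),0)::'k alg" "(0,1,0,0)::'k alg"]) (auto simp: E Anil_simp zero_prod_def char[symmetric] eigsp_def Dmap_def alg_smul_def vsmul_def)
  show o0m: "op 0 (-1) = Some 1"
    by (rule det[OF G, of _ _ "(0,1,0,0)::'k alg" "(0,0,0,(0,1))::'k alg"]) (auto simp: E Anil_simp zero_prod_def char[symmetric] eigsp_def Dmap_def alg_smul_def vsmul_def)
  show "op (-1) 0 = Some 1"
    by (rule det[OF G, of _ _ "(0,0,0,(0,1))::'k alg" "(0,1,0,0)::'k alg"]) (auto simp: E Anil_simp zero_prod_def char[symmetric] eigsp_def Dmap_def alg_smul_def vsmul_def)
  show "\<not> semigroup_grading_into {0, 1, -1 :: int} op (\<iota> :: int \<Rightarrow> 's::semigroup_mult)" for \<iota>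
    using nonsg[of op] o00 o01 o0m by blast
qed

end
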